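(* Let $X$ be a Fréchet space and $T$ a continuous linear operator on $X$ whose set of periodic points $\mathrm{Per}(T)=\{x\in X:T^nx=x\text{ for some }n\ge1\}$ is dense in $X$. Then $T$ is hyper-recurrent and $\mathrm{Hr}(T)$ is dense in $X$.
   Context: For a continuous linear operator $T$ on a Fréchet space $X$: $x$ is recurrent if $T^{\omega_n}x\to x$ for some strictly increasing sequence $(\omega_n)$ of positive integers; $\mathrm{Rec}(T)$ is the set of recurrent vectors and $T$ is recurrent if $\mathrm{Rec}(T)$ is dense. $\mathfrak{C}$ is the set of strictly increasing sequences $\omega$ with $T^{\omega_n}x\to x$ for some $x\ne0$; $\mathfrak{L}(\omega)=\{x:T^{\omega_n}x\to x\}$. $\mathrm{Hr}(T)$ is the set of $x\in\mathrm{Rec}(T)$ such that $\mathfrak{L}(\omega)$ is dense for every $\omega\in\mathfrak{C}$ with $x\in\mathfrak{L}(\omega)$; a recurrent $T$ is hyper-recurrent if $\mathrm{Hr}(T)\ne\emptyset$. *)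

theory Defs
  imports "HOL-Analysis.Analysis"
begin

definition frechet_space :: "'a::{real_vector, complete_space} itself \<Rightarrow> bool" where
  "frechet_space _ \<longleftrightarrow>
     (\<forall>x y z :: 'a. dist (x + z) (y + z) = dist x y) \<and>
     continuous_on UNIV (\<lambda>(x :: 'a, y :: 'a). x + y) \<and>
     continuous_on UNIV (\<lambda>(a :: real, x :: 'a). a *\<^sub>R x) \<and>
     (\<forall>U :: 'a set. open U \<and> 0 \<in> U \<longrightarrow> (\<exists>V. open V \<and> convex V \<and> 0 \<in> V \<and> V \<subseteq> U))"

definition Per :: "('a \<Rightarrow> 'a) \<Rightarrow> 'a set" where
  "Per T = {x. \<exists>n::nat. n \<ge> 1 \<and> (T ^^ n) x = x}"

definition L :: "('a::topological_space \<Rightarrow> 'a) \<Rightarrow> (nat \<Rightarrow> nat) \<Rightarrow> 'a set" where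
  "L T \<omega> = {x. (\<lambda>n. (T ^^ \<omega> n) x) \<longlonglongrightarrow> x}"

definition Rec :: "('a::topological_space \<Rightarrow> 'a) \<Rightarrow> 'a set" where
  "Rec T = {x. \<exists>\<omega>. strict_mono \<omega> \<and> (\<forall>n. 0 < \<omega> n) \<and> x \<in> L T \<omega>}"

definition recurrent :: "('a::topological_space \<Rightarrow> 'a) \<Rightarrow> bool" where
  "recurrent T \<longleftrightarrow> closure (Rec T) = UNIV"

definition frakC :: "('a::{topological_space,zero} \<Rightarrow> 'a) \<Rightarrow> (nat \<Rightarrow> nat) set" where
  "frakC T = {\<omega>. strict_mono \<omega> \<and> (\<forall>n. 0 < \<omega> n) \<and> (\<exists>x. x \<noteq> 0 \<and> x \<in> L T \<omega>)}"

definition Hr :: "('a::{topological_space,zero} \<Rightarrow> 'a) \<Rightarrow> 'a set" where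
  "Hr T = {x \<in> Rec T. \<forall>\<omega> \<in> frakC T. x \<in> L T \<omega> \<longrightarrow> closure (L T \<omega>) = UNIV}"

definition hyper_recurrent :: "('a::{topological_space,zero} \<Rightarrow> 'a) \<Rightarrow> bool" where
  "hyper_recurrent T \<longleftrightarrow> recurrent T \<and> Hr T \<noteq> {}"

end

theory Submission
  imports Defs
begin

locale ctx =
  fixes T :: "'a::{real_vector,complete_space} \<Rightarrow> 'a"
  assumes tr: "\<And>x y z::'a. dist (x+z) (y+z) = dist x y"
    and smul: "continuous_on UNIV (\<lambda>(a::real, x::'a). a *\<^sub>R x)"
    and lin: "linear T"
    and cont: "continuous_on UNIV T"
begin

lemma lin_pow: "linear (T^^m)"
proof (induction m)
  case 0 show ?case using linear_id by (simp add: id_def)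
next
  case (Suc m) show ?case using linear_compose[OF Suc lin] by (simp add: o_def)
qed

lemma cont_pow: "continuous_on UNIV (T^^m)"
  by (induction m) (auto intro: continuous_on_compose2[OF cont] simp: continuous_on_id[unfolded id_def])

lemma dist_nm: "dist x y = dist (x - y) (0::'a)"
  by (metis tr add.left_neutral diff_add_cancel)

lemma nm_add: "dist (u + v) (0::'a) \<le> dist u 0 + dist v 0"
proof -
  have "dist (u+v) 0 \<le> dist (u+v) v + dist v 0" by (rule dist_triangle)
  also have "dist (u+v) v = dist u 0" by (metis tr add.left_neutral)
  finally show ?thesis .
qed

lemma pow_diff: "(T^^m) (x - y) = (T^^m) x - (T^^m) y"
  using lin_pow linear_diff by blast

lemma pow_add: "(T^^m) (x + y) = (T^^m) x + (T^^m) y"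
  using lin_pow linear_add by blast

lemma pow_scale: "(T^^m) (c *\<^sub>R x) = c *\<^sub>R (T^^m) x"
  using lin_pow linear_scale by blast

lemma pow_zero: "(T^^m) 0 = 0"
  using lin_pow linear_0 by blast

lemma per_mult: "(T^^n) v = v \<Longrightarrow> (T^^(n*c)) v = v"
  by (induction c) (auto simp: funpow_add)

lemma per_mod: "(T^^n) v = v \<Longrightarrow> (T^^m) v = (T^^(m mod n)) v"
proof -
  assume h: "(T^^n) v = v"
  have "m = m mod n + n * (m div n)" by simp
  then have "(T^^m) v = (T^^(m mod n)) ((T^^(n * (m div n))) v)"
    by (metis comp_apply funpow_add)
  then show ?thesis using per_mult[OF h] by simp
qed

definition ex_per :: "'a \<Rightarrow> nat \<Rightarrow> bool" where
  "ex_per v N \<longleftrightarrow> N \<ge> 1 \<and> (\<forall>m. (T^^m) v = v \<longleftrightarrow> N dvd m)"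

lemma ex_per_zero: "ex_per 0 1"
  by (simp add: ex_per_def pow_zero)

lemma ex_per_exists:
  assumes "n \<ge> 1" "(T^^n) v = v" shows "\<exists>N. ex_per v N"
proof -
  define N where "N = (LEAST k. k \<ge> 1 \<and> (T^^k) v = v)"
  have N: "N \<ge> 1 \<and> (T^^N) v = v" unfolding N_def by (rule LeastI[of _ n]) (use assms in auto)
  have "(T^^m) v = v \<longleftrightarrow> N dvd m" for m
  proof
    assume h: "(T^^m) v = v"
    have "(T^^(m mod N)) v = v" using per_mod[OF conjunct2[OF N], of m] h by simp
    moreover have "m mod N < N" using N by simp
    ultimately have "m mod N = 0"
      using not_less_Least[of "m mod N" "\<lambda>k. k \<ge> 1 \<and> (T^^k) v = v"] unfolding N_def[symmetric]
      by (metis less_one not_le)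
    then show "N dvd m" by auto
  next
    assume "N dvd m"
    then obtain c where "m = N * c" by auto
    then show "(T^^m) v = v" using per_mult N by simp
  qed
  then show ?thesis using N unfolding ex_per_def by blast
qed

definition delta :: "'a \<Rightarrow> nat \<Rightarrow> real" where
  "delta s N = Min (insert 1 ((\<lambda>r. dist ((T^^r) s) s) ` {r. r < N \<and> (T^^r) s \<noteq> s}))"

lemma delta_pos: "delta s N > 0"
proof -
  have "finite {r. r < N \<and> (T^^r) s \<noteq> s}" by (rule finite_subset[of _ "{..<N}"]) auto
  then show ?thesis unfolding delta_def by (subst Min_gr_iff) auto
qed

lemma delta_le: assumes "ex_per s N" "(T^^m) s \<noteq> s" shows "delta s N \<le> dist ((T^^m) s) s"
proof -
  have N: "N \<ge> 1" "(T^^N) s = s" using assms(1) unfolding ex_per_def by auto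
  have e: "(T^^m) s = (T^^(m mod N)) s" by (rule per_mod[OF N(2)])
  have "finite {r. r < N \<and> (T^^r) s \<noteq> s}" by (rule finite_subset[of _ "{..<N}"]) auto
  moreover have "m mod N \<in> {r. r < N \<and> (T^^r) s \<noteq> s}" using N e assms(2) by auto
  ultimately show ?thesis unfolding delta_def e by (intro Min_le) auto
qed

lemma small: assumes "\<eta> > 0" shows "\<exists>\<tau>>0. \<forall>t. \<bar>t\<bar> < \<tau> \<longrightarrow> dist (t *\<^sub>R v) (0::'a) < \<eta>"
proof -
  have c: "continuous_on UNIV (\<lambda>t::real. t *\<^sub>R v)"
  proof -
    have "continuous_on UNIV (\<lambda>t::real. (t, v))" by (intro continuous_intros)
    from continuous_on_compose2[OF smul this] show ?thesis by simp
  qed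
  then obtain d where "d > 0" "\<forall>x'. dist x' 0 < d \<longrightarrow> dist (x' *\<^sub>R v) (0 *\<^sub>R v) < \<eta>"
    unfolding continuous_on_iff using assms by (metis UNIV_I)
  then show ?thesis by (auto simp: dist_real_def)
qed

lemma step:
  assumes s: "ex_per s a" and w: "ex_per w q" and e: "\<eta> > 0"
  shows "\<exists>t. ex_per (s + t *\<^sub>R w) (lcm a q) \<and> (\<forall>m. dist ((T^^m) (t *\<^sub>R w)) 0 \<le> \<eta>)"
proof -
  have q: "q \<ge> 1" "(T^^q) w = w" and a: "a \<ge> 1" "(T^^a) s = s"
    using s w unfolding ex_per_def by auto
  have "\<forall>r. \<exists>\<tau>>0. \<forall>t. \<bar>t\<bar> < \<tau> \<longrightarrow> dist (t *\<^sub>R (T^^r) w) 0 < \<eta>"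
    using small[OF e] by blast
  then obtain \<tau>f where \<tau>f: "\<And>r. \<tau>f r > 0" "\<And>r t. \<bar>t\<bar> < \<tau>f r \<Longrightarrow> dist (t *\<^sub>R (T^^r) w) 0 < \<eta>"
    by metis
  define \<tau> where "\<tau> = Min (\<tau>f ` {..<q})"
  have "0 \<in> {..<q}" using q by auto
  then have "{..<q} \<noteq> {}" by blast
  then have \<tau>pos: "\<tau> > 0" unfolding \<tau>_def using \<tau>f(1) by (subst Min_gr_iff) auto
  have sm: "dist ((T^^m) (t *\<^sub>R w)) 0 \<le> \<eta>" if "\<bar>t\<bar> < \<tau>" for t m
  proof -
    have "(T^^m) (t *\<^sub>R w) = t *\<^sub>R (T^^(m mod q)) w" using pow_scale per_mod[OF q(2)] by simp
    moreover have "m mod q < q" using q by simp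
    then have "\<tau> \<le> \<tau>f (m mod q)" unfolding \<tau>_def by (intro Min_le) auto
    ultimately show ?thesis using \<tau>f(2)[of t "m mod q"] that by fastforce
  qed
  define L where "L = lcm a q"
  have L1: "L \<ge> 1" unfolding L_def using a q by (simp add: Suc_le_eq lcm_pos_nat)
  define S where "S r = {t. (T^^r) (s + t *\<^sub>R w) = s + t *\<^sub>R w}" for r
  define B where "B = (\<Union>r\<in>{0<..<L}. S r)"
  have uniq: "t1 = t2" if "r \<in> {0<..<L}" "t1 \<in> S r" "t2 \<in> S r" for r t1 t2
  proof (rule ccontr)
    assume ne: "t1 \<noteq> t2"
    have h1: "(T^^r) s + t1 *\<^sub>R (T^^r) w = s + t1 *\<^sub>R w"
      and h2: "(T^^r) s + t2 *\<^sub>R (T^^r) w = s + t2 *\<^sub>R w"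
      using that(2,3) unfolding S_def by (auto simp: pow_add pow_scale)
    have "(t1 - t2) *\<^sub>R (T^^r) w = (t1 - t2) *\<^sub>R w"
      using arg_cong2[OF h1 h2, of "(-)"] by (simp add: algebra_simps)
    then have tw: "(T^^r) w = w" using ne by simp
    then have ts: "(T^^r) s = s" using h1 by simp
    have "a dvd r" "q dvd r" using s w ts tw unfolding ex_per_def by auto
    then have "L dvd r" unfolding L_def by simp
    then show False using that(1) by (auto dest: dvd_imp_le)
  qed
  have finS: "finite (S r)" if "r \<in> {0<..<L}" for r
  proof (cases "S r = {}")
    case False
    then obtain t0 where "t0 \<in> S r" by auto
    then have "S r \<subseteq> {t0}" using uniq[OF that] by auto
    then show ?thesis using finite_subset by blast
  qed simp
  have "finite B" unfolding B_def using finS by auto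
  then have "infinite ({0<..<\<tau>} - B)" using \<tau>pos by (intro Diff_infinite_finite) auto
  then obtain t where t: "t \<in> {0<..<\<tau>}" "t \<notin> B" by (metis Diff_iff finite.emptyI ex_in_conv)
  have bk: "(T^^m) (s + t *\<^sub>R w) = s + t *\<^sub>R w" if "L dvd m" for m
  proof -
    have "a dvd m" "q dvd m" using that unfolding L_def by (auto intro: dvd_trans)
    then have "(T^^m) s = s" "(T^^m) w = w" using s w unfolding ex_per_def by auto
    then show ?thesis by (simp add: pow_add pow_scale)
  qed
  have "L dvd m" if h: "(T^^m) (s + t *\<^sub>R w) = s + t *\<^sub>R w" for m
  proof (rule ccontr)
    assume nd: "\<not> L dvd m"
    have "(T^^(m mod L)) (s + t *\<^sub>R w) = s + t *\<^sub>R w"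
      using per_mod[OF bk[of L]] h by simp
    moreover have "m mod L \<in> {0<..<L}" using nd L1 by (auto simp: dvd_eq_mod_eq_0)
    ultimately have "t \<in> B" unfolding B_def S_def by blast
    then show False using t by simp
  qed
  then have "ex_per (s + t *\<^sub>R w) L" unfolding ex_per_def using L1 bk by blast
  moreover have "\<forall>m. dist ((T^^m) (t *\<^sub>R w)) 0 \<le> \<eta>" using sm t by auto
  ultimately show ?thesis unfolding L_def by blast
qed

definition nxt :: "nat \<Rightarrow> 'a \<times> nat \<times> real \<Rightarrow> 'a \<times> nat \<times> real" where
  "nxt k st = (case st of (s, N, \<eta>) \<Rightarrow>
     (let \<eta>' = min \<eta> (delta s N) / 8;
          p = (SOME p. ex_per (fst p) (snd p) \<and> N dvd snd p \<and>
                 ((\<exists>w. ex_per w (Suc k)) \<longrightarrow> Suc k dvd snd p) \<and>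
                 (\<forall>m. dist ((T^^m) (fst p - s)) 0 \<le> \<eta>'))
      in (fst p, snd p, \<eta>')))"

lemma nxt_spec:
  assumes "ex_per s N" "\<eta> > 0" "nxt k (s, N, \<eta>) = (s', N', \<eta>')"
  shows "\<eta>' = min \<eta> (delta s N) / 8 \<and> ex_per s' N' \<and> N dvd N' \<and>
    ((\<exists>w. ex_per w (Suc k)) \<longrightarrow> Suc k dvd N') \<and> (\<forall>m. dist ((T^^m) (s' - s)) 0 \<le> \<eta>')"
proof -
  define e where "e = min \<eta> (delta s N) / 8"
  have e0: "e > 0" unfolding e_def using assms(2) delta_pos by simp
  obtain w q where wq: "ex_per w q" "(\<exists>w. ex_per w (Suc k)) \<longrightarrow> q = Suc k"
  proof (cases "\<exists>w. ex_per w (Suc k)")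
    case True then show ?thesis using that by blast
  next
    case False then show ?thesis using that ex_per_zero by blast
  qed
  obtain t where t: "ex_per (s + t *\<^sub>R w) (lcm N q)" "\<forall>m. dist ((T^^m) (t *\<^sub>R w)) 0 \<le> e"
    using step[OF assms(1) wq(1) e0] by blast
  define P where "P = (\<lambda>p. ex_per (fst p) (snd p) \<and> N dvd snd p \<and>
                 ((\<exists>w. ex_per w (Suc k)) \<longrightarrow> Suc k dvd snd p) \<and>
                 (\<forall>m. dist ((T^^m) (fst p - s)) 0 \<le> e))"
  have "P (s + t *\<^sub>R w, lcm N q)" unfolding P_def using t wq(2) by auto
  then have PS: "P (SOME p. P p)" by (rule someI)
  have "nxt k (s, N, \<eta>) = (fst (SOME p. P p), snd (SOME p. P p), e)"
    unfolding nxt_def P_def e_def by (simp add: Let_def)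
  then have "s' = fst (SOME p. P p)" "N' = snd (SOME p. P p)" "\<eta>' = e" using assms(3) by auto
  then have "(s', N') = (SOME p. P p)" "\<eta>' = e" by auto
  then have PP: "P (s', N')" and ee: "\<eta>' = e" using PS by auto
  have A: "ex_per s' N' \<and> N dvd N' \<and> ((\<exists>w. ex_per w (Suc k)) \<longrightarrow> Suc k dvd N') \<and>
    (\<forall>m. dist ((T^^m) (s' - s)) 0 \<le> e)"
    using PP unfolding P_def by simp
  show ?thesis unfolding ee using A by (simp add: e_def)
qed

primrec sq :: "'a \<times> nat \<times> real \<Rightarrow> nat \<Rightarrow> 'a \<times> nat \<times> real" where
  "sq i 0 = i"
| "sq i (Suc k) = nxt k (sq i k)"

lemma main:
  assumes dense: "closure (Per T) = UNIV" and ep: "\<epsilon> > 0"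
  shows "\<exists>x \<in> Hr T. dist x z < \<epsilon>"
proof -
  obtain s0 where s0: "s0 \<in> Per T" "dist s0 z < \<epsilon>/2"
    using dense ep by (metis UNIV_I closure_approachable half_gt_zero)
  obtain N0 where N0: "ex_per s0 N0" using s0(1) ex_per_exists unfolding Per_def by blast
  define st where "st = sq (s0, N0, \<epsilon>/8)"
  define s where "s k = fst (st k)" for k
  define N where "N k = fst (snd (st k))" for k
  define \<eta> where "\<eta> k = snd (snd (st k))" for k
  have st_eq: "st k = (s k, N k, \<eta> k)" for k unfolding s_def N_def \<eta>_def by simp
  have inv: "ex_per (s k) (N k) \<and> \<eta> k > 0" for k
  proof (induction k)
    case 0 then show ?case using N0 ep unfolding s_def N_def \<eta>_def st_def by simp
  next
    case (Suc k)
    have "nxt k (s k, N k, \<eta> k) = (s (Suc k), N (Suc k), \<eta> (Suc k))"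
      using st_eq[of k] st_eq[of "Suc k"] unfolding st_def by simp
    from nxt_spec[OF _ _ this] Suc show ?case using delta_pos[of "s k" "N k"] by auto
  qed
  have F: "\<eta> (Suc k) = min (\<eta> k) (delta (s k) (N k)) / 8 \<and> N k dvd N (Suc k) \<and>
    ((\<exists>w. ex_per w (Suc k)) \<longrightarrow> Suc k dvd N (Suc k)) \<and>
    (\<forall>m. dist ((T^^m) (s (Suc k) - s k)) 0 \<le> \<eta> (Suc k))" for k
  proof -
    have "nxt k (s k, N k, \<eta> k) = (s (Suc k), N (Suc k), \<eta> (Suc k))"
      using st_eq[of k] st_eq[of "Suc k"] unfolding st_def by simp
    from nxt_spec[OF _ _ this] inv[of k] show ?thesis by auto
  qed
  have \<eta>0: "\<eta> 0 = \<epsilon>/8" unfolding \<eta>_def st_def by simp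
  have s0e: "s 0 = s0" unfolding s_def st_def by simp
  have \<eta>dec: "\<eta> (Suc k) \<le> \<eta> k / 8" for k using F[of k] by simp
  have \<eta>dl: "\<eta> (Suc k) \<le> delta (s k) (N k) / 8" for k using F[of k] by simp
  have \<eta>mono: "\<eta> j \<le> \<eta> k" if "k \<le> j" for j k
    using that
  proof (induction j rule: dec_induct)
    case (step j) then show ?case using \<eta>dec[of j] inv[of j] by linarith
  qed simp
  have \<eta>pow: "\<eta> k \<le> \<epsilon>/8 * (1/8)^k" for k
  proof (induction k)
    case 0 then show ?case using \<eta>0 by simp
  next
    case (Suc k) then show ?case using \<eta>dec[of k] by simp
  qed
  have \<eta>small: "\<exists>M. \<forall>k\<ge>M. \<eta> k < e" if "e > 0" for e
  proof -
    have "0 < e/\<epsilon>" using that ep by simp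
    then obtain M where M: "(1/8::real)^M < e / \<epsilon>" using real_arch_pow_inv[of "e/\<epsilon>" "1/8"] by auto
    have "\<eta> k < e" if "k \<ge> M" for k
    proof -
      have "\<eta> k \<le> \<eta> M" using \<eta>mono that by blast
      also have "\<dots> \<le> \<epsilon>/8 * (1/8)^M" by (rule \<eta>pow)
      also have "\<dots> < \<epsilon> * (e/\<epsilon>)" using M ep by (intro mult_strict_left_mono[of _ _ \<epsilon>, THEN le_less_trans[rotated]]) auto
      finally show ?thesis using ep by simp
    qed
    then show ?thesis by blast
  qed
  have D1: "dist ((T^^m) (s (k+d))) ((T^^m) (s k)) \<le> 2 * \<eta> (Suc k) - 2 * \<eta> (Suc (k+d))" for m k d
  proof (induction d)
    case 0 then show ?case by simp
  next
    case (Suc d)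
    have "dist ((T^^m) (s (Suc (k+d)))) ((T^^m) (s (k+d))) = dist ((T^^m) (s (Suc (k+d)) - s (k+d))) 0"
      unfolding pow_diff by (rule dist_nm)
    also have "\<dots> \<le> \<eta> (Suc (k+d))" using F by blast
    finally have "dist ((T^^m) (s (Suc (k+d)))) ((T^^m) (s (k+d))) \<le> \<eta> (Suc (k+d))" .
    moreover have "dist ((T^^m) (s (Suc (k+d)))) ((T^^m) (s k)) \<le>
      dist ((T^^m) (s (Suc (k+d)))) ((T^^m) (s (k+d))) + dist ((T^^m) (s (k+d))) ((T^^m) (s k))"
      by (rule dist_triangle)
    moreover have "\<eta> (Suc (Suc (k+d))) \<le> \<eta> (Suc (k+d)) / 8" by (rule \<eta>dec)
    ultimately show ?case using Suc.IH inv[of "Suc (k+d)"] unfolding add_Suc_right by linarith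
  qed
  have D1': "dist ((T^^m) (s j)) ((T^^m) (s k)) \<le> 2 * \<eta> (Suc k)" if "k \<le> j" for m j k
  proof -
    obtain d where "j = k + d" using le_Suc_ex[OF \<open>k \<le> j\<close>] by blast
    then have "dist ((T^^m) (s j)) ((T^^m) (s k)) \<le> 2 * \<eta> (Suc k) - 2 * \<eta> (Suc (k+d))"
      using D1[of m k d] by simp
    then show ?thesis using inv[of "Suc (k+d)"] by linarith
  qed
  have D1s: "dist (s j) (s k) \<le> 2 * \<eta> (Suc k)" if "k \<le> j" for j k
    using D1'[OF that, of 0] by simp
  have "Cauchy s"
  proof (rule metric_CauchyI)
    fix e :: real assume "e > 0"
    then obtain M where M: "\<forall>k\<ge>M. \<eta> k < e/4" using \<eta>small[of "e/4"] by auto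
    have "dist (s m) (s n) < e" if "m \<ge> M" "n \<ge> M" for m n
    proof -
      have "dist (s m) (s n) \<le> dist (s m) (s M) + dist (s n) (s M)" by (rule dist_triangle2)
      also have "\<dots> \<le> 4 * \<eta> (Suc M)" using D1s[OF that(1)] D1s[OF that(2)] by simp
      also have "\<dots> < e" using M[rule_format, of "Suc M"] by simp
      finally show ?thesis .
    qed
    then show "\<exists>M. \<forall>m\<ge>M. \<forall>n\<ge>M. dist (s m) (s n) < e" by blast
  qed
  then have "convergent s" by (simp add: Cauchy_convergent_iff)
  then obtain x where x: "s \<longlonglongrightarrow> x" unfolding convergent_def by blast
  have D2: "dist ((T^^m) x) ((T^^m) (s k)) \<le> 2 * \<eta> (Suc k)" for m k
  proof -
    have "(\<lambda>j. (T^^m) (s j)) \<longlonglongrightarrow> (T^^m) x"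
      by (rule continuous_on_tendsto_compose[OF cont_pow x]) auto
    then have "(\<lambda>j. dist ((T^^m) (s j)) ((T^^m) (s k))) \<longlonglongrightarrow> dist ((T^^m) x) ((T^^m) (s k))"
      by (intro tendsto_dist tendsto_const)
    then show ?thesis
      by (rule tendsto_upperbound) (auto intro: D1' simp: eventually_sequentially)
  qed
  have D2s: "dist x (s k) \<le> 2 * \<eta> (Suc k)" for k using D2[of 0 k] by simp
  have lower: "dist ((T^^m) x) x \<ge> delta (s k) (N k) / 2" if "(T^^m) (s k) \<noteq> s k" for m k
  proof -
    have "delta (s k) (N k) \<le> dist ((T^^m) (s k)) (s k)" using delta_le inv that by blast
    also have "\<dots> \<le> dist ((T^^m) (s k)) ((T^^m) x) + dist ((T^^m) x) x + dist x (s k)"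
    proof -
      have "dist ((T^^m) (s k)) (s k) \<le> dist ((T^^m) (s k)) ((T^^m) x) + dist ((T^^m) x) (s k)"
        by (rule dist_triangle)
      moreover have "dist ((T^^m) x) (s k) \<le> dist ((T^^m) x) x + dist x (s k)" by (rule dist_triangle)
      ultimately show ?thesis by linarith
    qed
    also have "\<dots> \<le> 4 * \<eta> (Suc k) + dist ((T^^m) x) x"
      using D2[of m k] D2s[of k] by (simp add: dist_commute)
    finally show ?thesis using \<eta>dl[of k] by simp
  qed
  have upper: "dist ((T^^m) x) x \<le> 4 * \<eta> (Suc k)" if "N k dvd m" for m k
  proof -
    have "(T^^m) (s k) = s k" using inv[of k] that unfolding ex_per_def by blast
    have "dist ((T^^m) x) x \<le> dist ((T^^m) x) (s k) + dist x (s k)" by (rule dist_triangle2)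
    then have "dist ((T^^m) x) x \<le> dist ((T^^m) x) ((T^^m) (s k)) + dist x (s k)"
      using \<open>(T^^m) (s k) = s k\<close> by simp
    then show ?thesis using D2[of m k] D2s[of k] by simp
  qed
  have Ndvd: "N k dvd N j" if "k \<le> j" for k j
    using that
  proof (induction j rule: dec_induct)
    case (step j) then show ?case using F[of j] dvd_trans by blast
  qed simp
  have N1: "N k \<ge> 1" for k using inv[of k] unfolding ex_per_def by simp
  define \<omega> where "\<omega> n = Suc n * N n" for n
  have "strict_mono \<omega>"
  proof (rule strict_mono_Suc_iff[THEN iffD2], intro allI)
    fix n
    have "N n \<le> N (Suc n)" using Ndvd[of n "Suc n"] N1[of "Suc n"] by (simp add: dvd_imp_le)
    have "Suc n * N n < Suc (Suc n) * N n" using N1[of n] by simp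
    also have "\<dots> \<le> Suc (Suc n) * N (Suc n)" using \<open>N n \<le> N (Suc n)\<close> by (intro mult_le_mono) auto
    finally show "\<omega> n < \<omega> (Suc n)" unfolding \<omega>_def .
  qed
  moreover have "\<forall>n. 0 < \<omega> n" unfolding \<omega>_def using N1 by (simp add: Suc_le_eq)
  moreover have "x \<in> L T \<omega>"
  proof -
    have "(\<lambda>n. (T^^\<omega> n) x) \<longlonglongrightarrow> x"
    proof (rule metric_LIMSEQ_I)
      fix r :: real assume "r > 0"
      then obtain M where M: "\<forall>k\<ge>M. \<eta> k < r/4" using \<eta>small[of "r/4"] by auto
      have "dist ((T^^\<omega> n) x) x < r" if "n \<ge> M" for n
      proof -
        have "dist ((T^^\<omega> n) x) x \<le> 4 * \<eta> (Suc n)" by (rule upper) (simp add: \<omega>_def)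
        also have "\<dots> < r" using M[rule_format, of "Suc n"] that by simp
        finally show ?thesis .
      qed
      then show "\<exists>M. \<forall>n\<ge>M. dist ((T^^\<omega> n) x) x < r" by blast
    qed
    then show ?thesis unfolding L_def by simp
  qed
  ultimately have rec: "x \<in> Rec T" unfolding Rec_def by blast
  have hr: "closure (L T \<omega>') = UNIV" if "x \<in> L T \<omega>'" for \<omega>'
  proof -
    have lim: "(\<lambda>n. (T^^\<omega>' n) x) \<longlonglongrightarrow> x" using that unfolding L_def by simp
    have "Per T \<subseteq> L T \<omega>'"
    proof
      fix y assume "y \<in> Per T"
      then obtain q where q: "ex_per y q" using ex_per_exists unfolding Per_def by blast
      then have q1: "q \<ge> 1" unfolding ex_per_def by simp
      then obtain k where k: "q = Suc k" by (metis Suc_le_D One_nat_def)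
      have qd: "q dvd N q" using F[of k] q k by blast
      have dp: "delta (s q) (N q) / 2 > 0" using delta_pos by simp
      from lim have "\<forall>\<^sub>F n in sequentially. dist ((T^^\<omega>' n) x) x < delta (s q) (N q) / 2"
        using dp by (rule tendstoD)
      then have "\<forall>\<^sub>F n in sequentially. (T^^\<omega>' n) y = y"
      proof (rule eventually_mono)
        fix n assume "dist ((T^^\<omega>' n) x) x < delta (s q) (N q) / 2"
        then have "(T^^\<omega>' n) (s q) = s q" using lower[of "\<omega>' n" q] by linarith
        then have "N q dvd \<omega>' n" using inv[of q] unfolding ex_per_def by blast
        then have "q dvd \<omega>' n" using qd dvd_trans by blast
        then show "(T^^\<omega>' n) y = y" using q unfolding ex_per_def by blast
      qed
      then have "(\<lambda>n. (T^^\<omega>' n) y) \<longlonglongrightarrow> y" by (rule tendsto_eventually)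
      then show "y \<in> L T \<omega>'" unfolding L_def by simp
    qed
    then have "closure (Per T) \<subseteq> closure (L T \<omega>')" by (rule closure_mono)
    then show ?thesis using dense by auto
  qed
  have "x \<in> Hr T" unfolding Hr_def using rec hr by blast
  moreover have "dist x z < \<epsilon>"
  proof -
    have "dist x z \<le> dist x s0 + dist s0 z" by (rule dist_triangle)
    moreover have "dist x s0 \<le> 2 * \<eta> 1" using D2s[of 0] s0e by simp
    moreover have "\<eta> 1 \<le> \<epsilon> / 64" using \<eta>dec[of 0] \<eta>0 by simp
    ultimately show ?thesis using s0(2) ep by simp
  qed
  ultimately show ?thesis by blast
qed

end

theorem theorem5p13:
  fixes T :: "'a::{real_vector, complete_space} \<Rightarrow> 'a"
  assumes "frechet_space TYPE('a)"
    and "linear T"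
    and "continuous_on UNIV T"
    and "closure (Per T) = UNIV"
  shows "hyper_recurrent T \<and> closure (Hr T) = UNIV"
proof -
  have f1: "\<forall>x y z::'a. dist (x+z) (y+z) = dist x y"
    and f2: "continuous_on UNIV (\<lambda>(a::real, x::'a). a *\<^sub>R x)"
    using assms(1) unfolding frechet_space_def by blast+
  interpret ctx T
    by (intro ctx.intro) (use f1 f2 assms(2,3) in blast)+
  have cl: "closure (Hr T) = UNIV"
  proof -
    have "z \<in> closure (Hr T)" for z
      unfolding closure_approachable using main[OF assms(4), of _ z] by blast
    then show ?thesis by auto
  qed
  have "Hr T \<subseteq> Rec T" unfolding Hr_def by auto
  then have "closure (Rec T) = UNIV" using cl closure_mono by blast
  moreover have "Hr T \<noteq> {}" using cl by auto
  ultimately show ?thesis unfolding hyper_recurrent_def recurrent_def using cl by auto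
qed

end
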